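(* Let $0<q<1$. Define the $q$-Genocchi numbers $g_{n,q}$ and $q$-Genocchi polynomials $G_{n,q}(x)$ by \[ \frac{2t}{e_q(t)+1}=\sum_{n=0}^\infty g_{n,q}\frac{t^n}{[n]_q!},\qquad \frac{2t}{e_q(t)+1}e_q(tx)=\sum_{n=0}^\infty G_{n,q}(x)\frac{t^n}{[n]_q!}. \] Then for every positive integer $n$, $G_{n,q}(x)$ satisfies the $q$-difference equation \[ \sum_{k=2}^{n}\frac{q^{n-k-1}g_{k,q}}{2[k]_q!}D_{q,x}^kG_{n,q}(x)-\frac{q^{n-2}}{2}D_{q,x}G_{n,q}(x)+q^{n-1}G_{n,q}(x)+xq^nD_{q,x}G_{n,q}(x)-[n]_qG_{n,q}(qx)=0, \] i.e. \[ \frac{1}{2q}\frac{g_{n,q}}{[n]_q!}D_{q,x}^nG_{n,q}(x)+\frac{g_{n-1,q}}{2[n-1]_q!}D_{q,x}^{n-1}G_{n,q}(x)+\dots+\frac{q^{n-3}g_{2,q}}{2[2]_q!}D_{q,x}^2G_{n,q}(x)-\frac{q^{n-2}}{2}D_{q,x}G_{n,q}(x)+q^{n-1}G_{n,q}(x)+xq^nD_{q,x}G_{n,q}(x)-[n]_qG_{n,q}(qx)=0. \]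
   Context: $[n]_q=\frac{1-q^n}{1-q}$, $[0]_q!=1$, $[n]_q!=[n]_q\cdots[1]_q$, $e_q(t)=\sum_{n\ge0}\frac{t^n}{[n]_q!}$. The $q$-derivative is $D_{q,x}f(x)=\frac{f(qx)-f(x)}{(q-1)x}$ (on polynomials $D_{q,x}x^n=[n]_qx^{n-1}$), and $D_{q,x}^k$ is its $k$-fold iterate. *)

theory Defs
  imports Complex_Main "HOL-Computational_Algebra.Formal_Power_Series"
begin

definition qint :: "real \<Rightarrow> nat \<Rightarrow> real" where
  "qint q n = (1 - q ^ n) / (1 - q)"

definition qfact :: "real \<Rightarrow> nat \<Rightarrow> real" where
  "qfact q n = (\<Prod>i = 1..n. qint q i)"

definition eq_fps :: "real \<Rightarrow> real fps" where
  "eq_fps q = Abs_fps (\<lambda>n. 1 / qfact q n)"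

definition eq_fps_scaled :: "real \<Rightarrow> real \<Rightarrow> real fps" where
  "eq_fps_scaled q x = Abs_fps (\<lambda>n. x ^ n / qfact q n)"

text \<open>Generating function 2t/(e_q(t)+1) (constant term of e_q(t)+1 is 2, so invertible).\<close>
definition genocchi_gf :: "real \<Rightarrow> real fps" where
  "genocchi_gf q = fps_const 2 * fps_X * inverse (eq_fps q + 1)"

definition qgenocchi_num :: "real \<Rightarrow> nat \<Rightarrow> real" where
  "qgenocchi_num q n = fps_nth (genocchi_gf q) n * qfact q n"

definition qgenocchi_poly :: "real \<Rightarrow> nat \<Rightarrow> real \<Rightarrow> real" where
  "qgenocchi_poly q n x = fps_nth (genocchi_gf q * eq_fps_scaled q x) n * qfact q n"

definition qD :: "real \<Rightarrow> (real \<Rightarrow> real) \<Rightarrow> real \<Rightarrow> real" where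
  "qD q f x = (f (q * x) - f x) / ((q - 1) * x)"

definition qD_iter :: "real \<Rightarrow> nat \<Rightarrow> (real \<Rightarrow> real) \<Rightarrow> real \<Rightarrow> real" where
  "qD_iter q k f = (qD q ^^ k) f"

end

theory Submission
  imports Defs
begin

unbundle fps_syntax

lemma qint_0[simp]: "qint q 0 = 0" by (simp add: qint_def)

lemma qint_nz: assumes "0 < q" "q < 1" "0 < n" shows "qint q n \<noteq> 0"
proof -
  have "q ^ n < 1" using assms by (simp add: power_less_one_iff)
  thus ?thesis using assms by (simp add: qint_def)
qed

lemma qfact_Suc: "qfact q (Suc n) = qfact q n * qint q (Suc n)"
  by (simp add: qfact_def prod.nat_ivl_Suc')

lemma qfact_nz: assumes "0 < q" "q < 1" shows "qfact q n \<noteq> 0"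
  using assms by (induct n) (auto simp: qfact_Suc qint_nz qfact_def)

definition sc :: "real \<Rightarrow> real fps \<Rightarrow> real fps" where
  "sc q f = Abs_fps (\<lambda>n. q ^ n * f $ n)"

lemma sc_mult: "sc q (f * g) = sc q f * sc q g"
proof (rule fps_ext)
  fix n
  have "(\<Sum>i=0..n. q ^ n * (f $ i * g $ (n - i))) = (\<Sum>i=0..n. q ^ i * f $ i * (q ^ (n - i) * g $ (n - i)))"
    by (rule sum.cong) (auto simp: power_add[symmetric])
  thus "sc q (f * g) $ n = (sc q f * sc q g) $ n"
    by (simp add: sc_def fps_mult_nth sum_distrib_left)
qed

lemma sc_add: "sc q (f + g) = sc q f + sc q g"
  by (rule fps_ext) (simp add: sc_def algebra_simps)

lemma sc_1: "sc q 1 = 1"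
  by (rule fps_ext) (simp add: sc_def)

lemma sc_2X: "sc q (fps_const 2 * fps_X) = fps_const (2*q) * fps_X"
proof (rule fps_ext)
  fix n show "sc q (fps_const 2 * fps_X) $ n = (fps_const (2*q) * fps_X) $ n"
    by (cases n) (auto simp: sc_def)
qed

lemma sc_E: assumes "0 < q" "q < 1"
  shows "sc q (eq_fps q) = eq_fps q + fps_const (q - 1) * (fps_X * eq_fps q)"
proof (rule fps_ext)
  fix n show "sc q (eq_fps q) $ n = (eq_fps q + fps_const (q - 1) * (fps_X * eq_fps q)) $ n"
  proof (cases n)
    case 0 thus ?thesis by (simp add: sc_def eq_fps_def qfact_def)
  next
    case (Suc m)
    have nz: "qfact q m \<noteq> 0" "qint q (Suc m) \<noteq> 0" using assms qfact_nz qint_nz by auto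
    have "q ^ Suc m / (qfact q m * qint q (Suc m)) = 1 / (qfact q m * qint q (Suc m)) + (q - 1) / qfact q m"
      using nz assms by (simp add: qint_def field_simps)
    thus ?thesis using Suc by (simp add: sc_def eq_fps_def qfact_Suc)
  qed
qed

definition ga :: "real \<Rightarrow> nat \<Rightarrow> real" where
  "ga q k = genocchi_gf q $ k"

lemma ga_0: "ga q 0 = 0" by (simp add: ga_def genocchi_gf_def)

lemma ga_1: "ga q 1 = 1"
proof -
  have "(eq_fps q + 1) $ 0 = 2" by (simp add: eq_fps_def qfact_def)
  thus ?thesis by (simp add: ga_def genocchi_gf_def fps_mult_nth_1)
qed

lemma ga_1': "ga q (Suc 0) = 1" using ga_1 by simp

lemma fps_key: assumes "0 < q" "q < 1"
  shows "fps_const ((q - 1)/2) * genocchi_gf q * sc q (genocchi_gf q)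
      - fps_const (q - 1) * (fps_X * sc q (genocchi_gf q)) - sc q (genocchi_gf q)
      + fps_const q * genocchi_gf q = 0"
proof -
  define A where "A = genocchi_gf q"
  define E where "E = eq_fps q"
  define B where "B = sc q A"
  have E0: "(E + 1) $ 0 \<noteq> 0" by (simp add: E_def eq_fps_def qfact_def)
  have hA: "A * (E + 1) = fps_const 2 * fps_X"
    unfolding A_def E_def genocchi_gf_def using E0[unfolded E_def]
    by (simp add: mult.assoc inverse_mult_eq_1)
  have hB: "B * (E + fps_const (q - 1) * (fps_X * E) + 1) = fps_const (2*q) * fps_X"
  proof -
    have "B * (E + fps_const (q - 1) * (fps_X * E) + 1) = sc q (A * (E + 1))"
      using sc_E[OF assms] by (simp add: B_def E_def sc_mult sc_add sc_1)
    thus ?thesis using hA sc_2X by simp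
  qed
  define V where "V = E + fps_const (q - 1) * (fps_X * E)"
  define P where "P = fps_const ((q - 1)/2) * A * B - fps_const (q - 1) * (fps_X * B) - B + fps_const q * A"
  have V0: "(V + 1) $ 0 \<noteq> 0" by (simp add: V_def E_def eq_fps_def qfact_def)
  have "P * ((E + 1) * (V + 1)) = fps_const ((q - 1)/2) * (A * (E + 1)) * (B * (V + 1))
      - fps_const (q - 1) * fps_X * (B * (V + 1)) * (E + 1) - (B * (V + 1)) * (E + 1)
      + fps_const q * (A * (E + 1)) * (V + 1)"
    by (simp add: P_def algebra_simps)
  also have "\<dots> = fps_const ((q - 1)/2) * (fps_const 2 * fps_X) * (fps_const (2*q) * fps_X)
      - fps_const (q - 1) * fps_X * (fps_const (2*q) * fps_X) * (E + 1) - (fps_const (2*q) * fps_X) * (E + 1)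
      + fps_const q * (fps_const 2 * fps_X) * (E + fps_const (q - 1) * (fps_X * E) + 1)"
    using hA hB by (simp add: V_def)
  also have "\<dots> = 0"
  proof -
    define c where "c = fps_const q"
    have 2: "fps_const (q - 1) = c - 1" unfolding c_def by (metis fps_const_1_eq_1 fps_const_sub)
    have 1: "fps_const ((q - 1)/2) * (fps_const 2 * fps_X) = (c - 1) * fps_X"
    proof -
      have "fps_const ((q - 1)/2) * (fps_const 2 * fps_X) = fps_const ((q - 1)/2 * 2) * fps_X"
        by (simp only: mult.assoc[symmetric] fps_const_mult)
      also have "(q - 1)/2 * 2 = q - 1" by simp
      finally show ?thesis using 2 by simp
    qed
    have 3: "fps_const (2*q) = 2 * c" by (simp add: c_def numeral_fps_const)
    have 4: "fps_const (2::real) = 2" by (simp add: numeral_fps_const)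
    show ?thesis unfolding 1 unfolding 2 3 4 c_def[symmetric] by (simp add: algebra_simps)
  qed
  finally have "P * ((E + 1) * (V + 1)) = 0" .
  moreover have "(E + 1) * (V + 1) \<noteq> 0" using E0 V0
    by (metis fps_mult_nth_0 fps_nonzero_nth mult_eq_0_iff)
  ultimately have "P = 0" by simp
  thus ?thesis by (simp add: P_def A_def B_def)
qed


lemma nthc: "(fps_const c * (f :: real fps)) $ n = c * f $ n" by (simp add: fps_const_mult_left)

lemma coef_key: assumes "0 < q" "q < 1" "1 \<le> r"
  shows "(1/2) * (\<Sum>k=2..r. q ^ (r - k) * ga q k * ga q (r - k)) - q ^ (r - 1) / 2 * ga q (r - 1)
         - q * qint q (r - 1) * ga q r = 0"
proof -
  have "fps_nth (fps_const ((q - 1)/2) * genocchi_gf q * sc q (genocchi_gf q)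
      - fps_const (q - 1) * (fps_X * sc q (genocchi_gf q)) - sc q (genocchi_gf q)
      + fps_const q * genocchi_gf q) r = 0" using fps_key[OF assms(1,2)] by simp
  hence e: "(q - 1)/2 * (\<Sum>k=0..r. ga q k * (q ^ (r - k) * ga q (r - k)))
      - (q - 1) * (q ^ (r - 1) * ga q (r - 1)) - q ^ r * ga q r + q * ga q r = 0"
    using assms(3) by (simp only: mult.assoc fps_sub_nth fps_add_nth nthc fps_X_mult_nth) (simp add: fps_mult_nth sc_def ga_def)
  have s: "(\<Sum>k=0..r. ga q k * (q ^ (r - k) * ga q (r - k)))
     = q ^ (r - 1) * ga q (r - 1) + (\<Sum>k=2..r. q ^ (r - k) * ga q k * ga q (r - k))"
    using assms(3) by (simp add: sum.atLeast_Suc_atMost ga_0 ga_1' numeral_2_eq_2 algebra_simps)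
  have qi: "q * qint q (r - 1) * (q - 1) = q ^ r - q"
  proof -
    obtain r' where r: "r = Suc r'" using assms(3) by (cases r) auto
    show ?thesis using assms(2) unfolding r by (simp add: qint_def field_simps)
  qed
  define S where "S = (\<Sum>k=2..r. q ^ (r - k) * ga q k * ga q (r - k))"
  define g1 where "g1 = q ^ (r - 1) * ga q (r - 1)"
  have e2: "(q - 1)/2 * (g1 + S) - (q - 1) * g1 - q ^ r * ga q r + q * ga q r = 0"
    using e unfolding s S_def[symmetric] g1_def[symmetric] .
  have "(q - 1) * ((1/2) * S - q ^ (r - 1) / 2 * ga q (r - 1) - q * qint q (r - 1) * ga q r)
      = (q - 1)/2 * (g1 + S) - (q - 1) * g1 - (q * qint q (r - 1) * (q - 1)) * ga q r"
    unfolding g1_def by (simp add: algebra_simps)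
  also have "\<dots> = 0" unfolding qi using e2 by (simp add: algebra_simps)
  finally have "(q - 1) * ((1/2) * (\<Sum>k=2..r. q ^ (r - k) * ga q k * ga q (r - k)) - q ^ (r - 1) / 2 * ga q (r - 1)
         - q * qint q (r - 1) * ga q r) = 0" unfolding S_def .
  thus ?thesis using assms by simp
qed

definition hh :: "real \<Rightarrow> nat \<Rightarrow> real \<Rightarrow> real" where
  "hh q m x = (\<Sum>i\<le>m. ga q (m - i) * x ^ i / qfact q i)"

lemma qD_hh: assumes "0 < q" "q < 1" "x \<noteq> 0"
  shows "qD q (hh q (Suc m)) x = hh q m x"
proof -
  have "qD q (hh q (Suc m)) x = (\<Sum>i\<le>Suc m. ga q (Suc m - i) * (q*x) ^ i / qfact q i - ga q (Suc m - i) * x ^ i / qfact q i) / ((q - 1) * x)"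
    by (simp only: qD_def hh_def sum_subtractf)
  also have "\<dots> = (\<Sum>i\<le>Suc m. ga q (Suc m - i) * ((q*x) ^ i - x ^ i) / qfact q i / ((q - 1) * x))"
    unfolding sum_divide_distrib by (rule sum.cong) (auto simp: diff_divide_distrib right_diff_distrib)
  also have "\<dots> = (\<Sum>i\<le>m. ga q (Suc m - Suc i) * ((q*x) ^ Suc i - x ^ Suc i) / qfact q (Suc i) / ((q - 1) * x))"
    unfolding sum.atMost_Suc_shift by simp
  also have "\<dots> = hh q m x" unfolding hh_def
  proof (rule sum.cong)
    fix i assume "i \<in> {..m}"
    have nz: "qfact q i \<noteq> 0" "qint q (Suc i) \<noteq> 0" using assms qfact_nz qint_nz by auto
    have "((q*x) ^ Suc i - x ^ Suc i) / (qfact q i * qint q (Suc i)) / ((q - 1) * x) = x ^ i / qfact q i"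
    proof -
      have a: "(q*x) ^ Suc i - x ^ Suc i = x ^ i * (x * (q ^ Suc i - 1))"
        by (simp add: power_mult_distrib algebra_simps)
      have b: "qint q (Suc i) * ((q - 1) * x) = x * (q ^ Suc i - 1)"
        using assms by (simp add: qint_def field_simps)
      have "q ^ Suc i < 1" using assms power_less_one_iff[of q "Suc i"] by linarith
      hence c: "x * (q ^ Suc i - 1) \<noteq> 0" using assms by simp
      show ?thesis unfolding a divide_divide_eq_left mult.assoc b using c nz by simp
    qed
    thus "ga q (Suc m - Suc i) * ((q*x) ^ Suc i - x ^ Suc i) / qfact q (Suc i) / ((q - 1) * x) = ga q (m - i) * x ^ i / qfact q i"
      by (simp add: qfact_Suc times_divide_eq_right[symmetric] del: times_divide_eq_right)
  qed simp
  finally show ?thesis .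
qed

lemma poly_hh: "qgenocchi_poly q n x = qfact q n * hh q n x"
proof -
  have "(\<Sum>i=0..n. ga q i * (x ^ (n - i) / qfact q (n - i))) = (\<Sum>i=0..n. ga q (n + 0 - i) * (x ^ (n - (n + 0 - i)) / qfact q (n - (n + 0 - i))))"
    by (rule sum.atLeastAtMost_rev)
  also have "\<dots> = hh q n x" unfolding hh_def atMost_atLeast0 by (rule sum.cong) auto
  finally show ?thesis
    by (simp add: qgenocchi_poly_def fps_mult_nth eq_fps_scaled_def ga_def[symmetric])
qed

lemma iter_hh: assumes "0 < q" "q < 1"
  shows "k \<le> n \<Longrightarrow> y \<noteq> 0 \<Longrightarrow> qD_iter q k (qgenocchi_poly q n) y = qfact q n * hh q (n - k) y"
proof (induction k arbitrary: y)
  case 0 thus ?case by (simp add: qD_iter_def poly_hh)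
next
  case (Suc k)
  have qy: "q * y \<noteq> 0" using Suc assms by simp
  have e: "n - k = Suc (n - Suc k)" using Suc by simp
  have "qD_iter q (Suc k) (qgenocchi_poly q n) y = qD q (qD_iter q k (qgenocchi_poly q n)) y"
    by (simp add: qD_iter_def)
  also have "\<dots> = qfact q n * qD q (hh q (n - k)) y"
    using Suc.IH[of y] Suc.IH[OF _ qy] Suc.prems by (simp add: qD_def field_simps)
  also have "\<dots> = qfact q n * hh q (n - Suc k) y" unfolding e using qD_hh assms Suc by simp
  finally show ?case .
qed


lemma hh_ext: assumes "p \<le> N"
  shows "hh q p x = (\<Sum>i\<le>N. (if i \<le> p then ga q (p - i) else 0) * (x ^ i / qfact q i))"
proof -
  have "(\<Sum>i\<le>N. (if i \<le> p then ga q (p - i) else 0) * (x ^ i / qfact q i))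
      = (\<Sum>i\<le>N. if i \<le> p then ga q (p - i) * (x ^ i / qfact q i) else 0)"
    by (rule sum.cong) auto
  also have "\<dots> = (\<Sum>i\<in>{i\<in>{..N}. i \<le> p}. ga q (p - i) * (x ^ i / qfact q i))"
    by (rule sum.inter_filter[symmetric]) simp
  also have "{i\<in>{..N}. i \<le> p} = {..p}" using assms by auto
  finally show ?thesis by (simp add: hh_def)
qed

lemma hh_w: "hh q n x = (\<Sum>i\<le>n. ga q (n - i) * (x ^ i / qfact q i))"
  by (simp add: hh_def)

lemma hh_q: "hh q n (q * x) = (\<Sum>i\<le>n. ga q (n - i) * q ^ i * (x ^ i / qfact q i))"
  unfolding hh_def by (rule sum.cong) (auto simp: power_mult_distrib)

lemma x_hh: assumes "0 < q" "q < 1"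
  shows "x * hh q m x = (\<Sum>i\<le>Suc m. qint q i * ga q (Suc m - i) * (x ^ i / qfact q i))"
proof -
  have "(\<Sum>i\<le>Suc m. qint q i * ga q (Suc m - i) * (x ^ i / qfact q i))
      = (\<Sum>i\<le>m. qint q (Suc i) * ga q (m - i) * (x ^ Suc i / qfact q (Suc i)))"
    unfolding sum.atMost_Suc_shift by simp
  also have "\<dots> = (\<Sum>i\<le>m. x * (ga q (m - i) * x ^ i / qfact q i))"
  proof (rule sum.cong)
    fix i assume "i \<in> {..m}"
    have nz: "qfact q i \<noteq> 0" "qint q (Suc i) \<noteq> 0" using assms qfact_nz qint_nz by auto
    show "qint q (Suc i) * ga q (m - i) * (x ^ Suc i / qfact q (Suc i)) = x * (ga q (m - i) * x ^ i / qfact q i)"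
      using nz by (simp add: qfact_Suc field_simps)
  qed simp
  finally show ?thesis by (simp add: hh_def sum_distrib_left)
qed

lemma powi1: "(q::real) \<noteq> 0 \<Longrightarrow> q powi (int N - 1) = q ^ N / q"
  using power_int_diff[of q "int N" 1] by simp

lemma powi2: "(q::real) \<noteq> 0 \<Longrightarrow> q powi (int N - 2) = q ^ N / q ^ 2"
  using power_int_diff[of q "int N" 2] by simp

lemma qint_id: assumes "q < 1"
  shows "q ^ (i + r) + q ^ Suc (i + r) * qint q i - qint q (Suc (i + r)) * q ^ i = - (q ^ i * qint q r)"
proof -
  have d: "1 - q \<noteq> 0" using assms by simp
  have qm: "\<And>k. qint q k * (1 - q) = 1 - q ^ k" using d by (simp add: qint_def)
  have "(1 - q) * (q ^ (i + r) + q ^ Suc (i + r) * qint q i - qint q (Suc (i + r)) * q ^ i)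
     = (1 - q) * q ^ (i + r) + q ^ Suc (i + r) * (qint q i * (1 - q)) - (qint q (Suc (i + r)) * (1 - q)) * q ^ i"
    by (simp add: algebra_simps)
  also have "\<dots> = - (q ^ i * (qint q r * (1 - q)))" unfolding qm by (simp add: power_add algebra_simps)
  finally have "(1 - q) * (q ^ (i + r) + q ^ Suc (i + r) * qint q i - qint q (Suc (i + r)) * q ^ i) = (1 - q) * (- (q ^ i * qint q r))"
    by (simp add: algebra_simps)
  thus ?thesis using d mult_left_cancel by blast
qed

lemma coefC: assumes "0 < q" "q < 1" "i \<le> Suc m"
  shows "(\<Sum>k=2..Suc m. q powi (int (Suc m) - int k - 1) * (ga q k / 2) * (if i \<le> Suc m - k then ga q (Suc m - k - i) else 0))
     - q powi (int (Suc m) - 2) / 2 * (if i \<le> m then ga q (m - i) else 0)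
     + q ^ m * ga q (Suc m - i) + q ^ Suc m * (qint q i * ga q (Suc m - i))
     - qint q (Suc m) * (ga q (Suc m - i) * q ^ i) = 0"
proof (cases "i = Suc m")
  case True
  have "(\<Sum>k=2..Suc m. q powi (int (Suc m) - int k - 1) * (ga q k / 2) * (if i \<le> Suc m - k then ga q (Suc m - k - i) else 0)) = 0"
    using True by (intro sum.neutral) auto
  thus ?thesis using True by (simp add: ga_0)
next
  case False
  define r where "r = Suc m - i"
  have r1: "1 \<le> r" using False assms(3) by (simp add: r_def)
  obtain r' where r': "r = Suc r'" using r1 by (cases r) auto
  have n: "Suc m = i + r" using assms(3) by (simp add: r_def)
  have q0: "q \<noteq> 0" using assms by simp
  have "(\<Sum>k=2..Suc m. q powi (int (Suc m) - int k - 1) * (ga q k / 2) * (if i \<le> Suc m - k then ga q (Suc m - k - i) else 0))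
      = (\<Sum>k=2..Suc m. if k \<le> r then q ^ i / q * (1/2 * (q ^ (r - k) * ga q k * ga q (r - k))) else 0)"
  proof (rule sum.cong)
    fix k assume k: "k \<in> {2..Suc m}"
    show "q powi (int (Suc m) - int k - 1) * (ga q k / 2) * (if i \<le> Suc m - k then ga q (Suc m - k - i) else 0)
       = (if k \<le> r then q ^ i / q * (1/2 * (q ^ (r - k) * ga q k * ga q (r - k))) else 0)"
    proof (cases "k \<le> r")
      case True
      have e: "int (Suc m) - int k - 1 = int (i + (r - k)) - 1" using True n by simp
      have "q powi (int (Suc m) - int k - 1) = q ^ (i + (r - k)) / q" unfolding e by (rule powi1[OF q0])
      also have "q ^ (i + (r - k)) = q ^ i * q ^ (r - k)" by (rule power_add)
      finally have pw: "q powi (int (Suc m) - int k - 1) = q ^ i * q ^ (r - k) / q" .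
      moreover have "i \<le> Suc m - k" "Suc m - k - i = r - k" using True n by auto
      ultimately show ?thesis using True by simp
    next
      case False
      hence "\<not> i \<le> Suc m - k" using n k by auto
      thus ?thesis using False by simp
    qed
  qed simp
  also have "\<dots> = (\<Sum>k\<in>{k\<in>{2..Suc m}. k \<le> r}. q ^ i / q * (1/2 * (q ^ (r - k) * ga q k * ga q (r - k))))"
    by (rule sum.inter_filter[symmetric]) simp
  also have "{k\<in>{2..Suc m}. k \<le> r} = {2..r}" using n by auto
  finally have S: "(\<Sum>k=2..Suc m. q powi (int (Suc m) - int k - 1) * (ga q k / 2) * (if i \<le> Suc m - k then ga q (Suc m - k - i) else 0))
     = q ^ i / q * (1/2 * (\<Sum>k=2..r. q ^ (r - k) * ga q k * ga q (r - k)))"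
    by (simp add: sum_distrib_left)
  have T2: "q powi (int (Suc m) - 2) / 2 * (if i \<le> m then ga q (m - i) else 0) = q ^ i / q * (q ^ (r - 1) / 2 * ga q (r - 1))"
  proof -
    have "i \<le> m" "m - i = r - 1" using n r1 by auto
    moreover have "q powi (int (Suc m) - 2) = q ^ i * q ^ (r - 1) / q"
      unfolding powi2[OF q0] n using r' q0 by (simp add: power_add field_simps power2_eq_square)
    ultimately show ?thesis by simp
  qed
  have T3: "q ^ m * ga q (Suc m - i) + q ^ Suc m * (qint q i * ga q (Suc m - i))
     - qint q (Suc m) * (ga q (Suc m - i) * q ^ i) = - (q ^ i / q * (q * qint q (r - 1) * ga q r))"
  proof -
    have m: "m = i + r'" using n r' by simp
    have "q ^ m + q ^ Suc m * qint q i - qint q (Suc m) * q ^ i = - (q ^ i * qint q r')"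
      unfolding m by (rule qint_id[OF assms(2)])
    hence "(q ^ m + q ^ Suc m * qint q i - qint q (Suc m) * q ^ i) * ga q r = - (q ^ i * qint q r') * ga q r" by simp
    thus ?thesis using q0 r' by (simp add: r_def[symmetric] algebra_simps)
  qed
  have K: "(1/2) * (\<Sum>k=2..r. q ^ (r - k) * ga q k * ga q (r - k)) - q ^ (r - 1) / 2 * ga q (r - 1)
         - q * qint q (r - 1) * ga q r = 0" by (rule coef_key[OF assms(1,2) r1])
  have "q ^ i / q * ((1/2) * (\<Sum>k=2..r. q ^ (r - k) * ga q k * ga q (r - k)) - q ^ (r - 1) / 2 * ga q (r - 1)
         - q * qint q (r - 1) * ga q r) = 0" using K by simp
  thus ?thesis unfolding S T2 using T3 by (simp add: algebra_simps)
qed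


lemma T_zero: assumes "0 < q" "q < 1"
  shows "(\<Sum>k=2..Suc m. q powi (int (Suc m) - int k - 1) * (ga q k / 2) * hh q (Suc m - k) x)
     - q powi (int (Suc m) - 2) / 2 * hh q m x + q ^ m * hh q (Suc m) x
     + q ^ Suc m * (x * hh q m x) - qint q (Suc m) * hh q (Suc m) (q * x) = 0"
proof -
  define w where "w i = x ^ i / qfact q i" for i
  define c where "c k = q powi (int (Suc m) - int k - 1) * (ga q k / 2)" for k
  have s1: "(\<Sum>k=2..Suc m. c k * hh q (Suc m - k) x)
      = (\<Sum>i\<le>Suc m. (\<Sum>k=2..Suc m. c k * (if i \<le> Suc m - k then ga q (Suc m - k - i) else 0)) * w i)"
  proof -
    have "(\<Sum>k=2..Suc m. c k * hh q (Suc m - k) x)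
        = (\<Sum>k=2..Suc m. \<Sum>i\<le>Suc m. c k * ((if i \<le> Suc m - k then ga q (Suc m - k - i) else 0) * w i))"
    proof (rule sum.cong)
      fix k assume "k \<in> {2..Suc m}"
      show "c k * hh q (Suc m - k) x = (\<Sum>i\<le>Suc m. c k * ((if i \<le> Suc m - k then ga q (Suc m - k - i) else 0) * w i))"
        by (simp only: hh_ext[of "Suc m - k" "Suc m" q x, OF diff_le_self] sum_distrib_left w_def)
    qed simp
    also have "\<dots> = (\<Sum>i\<le>Suc m. \<Sum>k=2..Suc m. c k * ((if i \<le> Suc m - k then ga q (Suc m - k - i) else 0) * w i))"
      by (rule sum.swap)
    also have "\<dots> = (\<Sum>i\<le>Suc m. (\<Sum>k=2..Suc m. c k * (if i \<le> Suc m - k then ga q (Suc m - k - i) else 0)) * w i)"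
      by (rule sum.cong) (simp_all only: sum_distrib_right mult.assoc)
    finally show ?thesis .
  qed
  have s2: "hh q m x = (\<Sum>i\<le>Suc m. (if i \<le> m then ga q (m - i) else 0) * w i)"
    unfolding w_def by (rule hh_ext) simp
  have s3: "hh q (Suc m) x = (\<Sum>i\<le>Suc m. ga q (Suc m - i) * w i)" unfolding w_def by (rule hh_w)
  have s4: "x * hh q m x = (\<Sum>i\<le>Suc m. qint q i * ga q (Suc m - i) * w i)"
    unfolding w_def by (rule x_hh[OF assms])
  have s5: "hh q (Suc m) (q * x) = (\<Sum>i\<le>Suc m. ga q (Suc m - i) * q ^ i * w i)"
    unfolding w_def by (rule hh_q)
  have "(\<Sum>k=2..Suc m. q powi (int (Suc m) - int k - 1) * (ga q k / 2) * hh q (Suc m - k) x)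
     - q powi (int (Suc m) - 2) / 2 * hh q m x + q ^ m * hh q (Suc m) x
     + q ^ Suc m * (x * hh q m x) - qint q (Suc m) * hh q (Suc m) (q * x)
     = (\<Sum>i\<le>Suc m. ((\<Sum>k=2..Suc m. c k * (if i \<le> Suc m - k then ga q (Suc m - k - i) else 0))
     - q powi (int (Suc m) - 2) / 2 * (if i \<le> m then ga q (m - i) else 0)
     + q ^ m * ga q (Suc m - i) + q ^ Suc m * (qint q i * ga q (Suc m - i))
     - qint q (Suc m) * (ga q (Suc m - i) * q ^ i)) * w i)"
    unfolding c_def[symmetric] s4 unfolding s1 s2 s3 s5
    by (simp add: sum_distrib_left sum.distrib sum_subtractf algebra_simps)
  also have "\<dots> = 0"
    by (rule sum.neutral) (use coefC[OF assms] in \<open>auto simp: c_def\<close>)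
  finally show ?thesis .
qed

theorem theorem8:
  fixes q x :: real and n :: nat
  assumes "0 < q" and "q < 1" and "1 \<le> n" and "x \<noteq> 0"
  shows "(\<Sum>k = 2..n. q powi (int n - int k - 1) * qgenocchi_num q k / (2 * qfact q k)
              * qD_iter q k (qgenocchi_poly q n) x)
         - q powi (int n - 2) / 2 * qD q (qgenocchi_poly q n) x
         + q ^ (n - 1) * qgenocchi_poly q n x
         + x * q ^ n * qD q (qgenocchi_poly q n) x
         - qint q n * qgenocchi_poly q n (q * x) = 0"
proof -
  obtain m where n: "n = Suc m" using assms(3) by (cases n) auto
  define F where "F = qfact q n"
  have D1: "qD q (qgenocchi_poly q n) x = F * hh q m x"
    using iter_hh[OF assms(1,2), of 1 n x] assms n by (simp add: qD_iter_def F_def)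
  have S: "(\<Sum>k = 2..n. q powi (int n - int k - 1) * qgenocchi_num q k / (2 * qfact q k)
              * qD_iter q k (qgenocchi_poly q n) x)
      = F * (\<Sum>k=2..Suc m. q powi (int (Suc m) - int k - 1) * (ga q k / 2) * hh q (Suc m - k) x)"
    unfolding sum_distrib_left n
  proof (rule sum.cong)
    fix k assume k: "k \<in> {2..Suc m}"
    have nz: "qfact q k \<noteq> 0" using qfact_nz assms by auto
    have "qD_iter q k (qgenocchi_poly q (Suc m)) x = F * hh q (Suc m - k) x"
      using iter_hh[OF assms(1,2), of k "Suc m" x] k assms n by (simp add: F_def)
    moreover have "qgenocchi_num q k / (2 * qfact q k) = ga q k / 2"
      using nz by (simp add: qgenocchi_num_def ga_def)
    moreover have "\<And>a b. a * qgenocchi_num q k / (2 * qfact q k) * b = a * (qgenocchi_num q k / (2 * qfact q k)) * b"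
      by simp
    ultimately show "q powi (int (Suc m) - int k - 1) * qgenocchi_num q k / (2 * qfact q k) * qD_iter q k (qgenocchi_poly q (Suc m)) x
        = F * (q powi (int (Suc m) - int k - 1) * (ga q k / 2) * hh q (Suc m - k) x)"
      by (simp only:) (simp add: algebra_simps)
  qed simp
  have P1: "qgenocchi_poly q n x = F * hh q (Suc m) x" using poly_hh n F_def by simp
  have P2: "qgenocchi_poly q n (q * x) = F * hh q (Suc m) (q * x)" using poly_hh n F_def by simp
  have "(\<Sum>k = 2..n. q powi (int n - int k - 1) * qgenocchi_num q k / (2 * qfact q k)
              * qD_iter q k (qgenocchi_poly q n) x)
         - q powi (int n - 2) / 2 * qD q (qgenocchi_poly q n) x
         + q ^ (n - 1) * qgenocchi_poly q n x
         + x * q ^ n * qD q (qgenocchi_poly q n) x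
         - qint q n * qgenocchi_poly q n (q * x)
     = F * ((\<Sum>k=2..Suc m. q powi (int (Suc m) - int k - 1) * (ga q k / 2) * hh q (Suc m - k) x)
     - q powi (int (Suc m) - 2) / 2 * hh q m x + q ^ m * hh q (Suc m) x
     + q ^ Suc m * (x * hh q m x) - qint q (Suc m) * hh q (Suc m) (q * x))"
    unfolding S D1 P1 P2 by (simp add: n algebra_simps)
  also have "\<dots> = 0" using T_zero[OF assms(1,2)] by simp
  finally show ?thesis .
qed

end
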